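(* Fix $\beta>2$. Let $G_\beta(x)=\frac1\beta\log x-\frac32x$ for $x>0$, $l_\beta=2/(3\beta)$, $g_\beta=G_\beta(l_\beta)$. For $y<g_\beta$ let $H_\beta(y)<l_\beta<K_\beta(y)$ be the two solutions of $G_\beta(x)=y$, and set $H_\beta(g_\beta)=K_\beta(g_\beta)=l_\beta$. For $k=1,2$ let $S_\beta^{(k)}:(-\infty,g_\beta]\to\mathbb{R}$, $S_\beta^{(k)}(y)=kH_\beta(y)+K_\beta(y)$. Then: (1) $S_\beta^{(1)}$ is decreasing on $(-\infty,g_\beta]$; (2) there exists $\tilde g_\beta<g_\beta$ such that $S_\beta^{(2)}$ is decreasing on $(-\infty,\tilde g_\beta)$ and increasing on $(\tilde g_\beta,g_\beta]$.
   Context: $G_\beta$ is increasing on $(0,l_\beta)$, decreasing on $(l_\beta,\infty)$, and tends to $-\infty$ at $0$ and at $\infty$, so $H_\beta$ and $K_\beta$ are well defined, continuous, $H_\beta$ increasing and $K_\beta$ decreasing on $(-\infty,g_\beta]$. *)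

theory Defs
  imports "HOL-Analysis.Analysis"
begin

definition G :: "real \<Rightarrow> real \<Rightarrow> real" where
  "G \<beta> x = (1/\<beta>) * ln x - (3/2) * x"

definition l :: "real \<Rightarrow> real" where
  "l \<beta> = 2 / (3 * \<beta>)"

definition g :: "real \<Rightarrow> real" where
  "g \<beta> = G \<beta> (l \<beta>)"

definition H :: "real \<Rightarrow> real \<Rightarrow> real" where
  "H \<beta> y = (THE x. 0 < x \<and> x \<le> l \<beta> \<and> G \<beta> x = y)"

definition K :: "real \<Rightarrow> real \<Rightarrow> real" where
  "K \<beta> y = (THE x. l \<beta> \<le> x \<and> G \<beta> x = y)"

definition S :: "real \<Rightarrow> real \<Rightarrow> real \<Rightarrow> real" where
  "S k \<beta> y = k * H \<beta> y + K \<beta> y"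

end

theory Submission
  imports Defs "HOL-Real_Asymp.Real_Asymp"
begin


lemma ln_lt: "0 < x \<Longrightarrow> x \<noteq> 1 \<Longrightarrow> ln x < x - (1::real)"
  using ln_le_minus_one ln_eq_minus_one by force

lemma P_inc: "0 < a \<Longrightarrow> a < b \<Longrightarrow> b \<le> 1 \<Longrightarrow> ln a - a < ln b - (b::real)"
proof -
  assume h: "0 < a" "a < b" "b \<le> 1"
  have "ln a - ln b < (a - b)/b" using ln_diff_less[of a b] h by auto
  moreover have "(a-b)/b \<le> a - b"
  proof -
    have "(a-b)/b - (a-b) = (a-b)*(1-b)/b" using h by (simp add: field_simps)
    moreover have "(a-b)*(1-b)/b \<le> 0" using h
      by (intro divide_nonpos_pos mult_nonpos_nonneg) auto
    ultimately show ?thesis by linarith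
  qed
  ultimately show ?thesis by linarith
qed

lemma P_dec: "1 \<le> a \<Longrightarrow> a < b \<Longrightarrow> ln b - b < ln a - (a::real)"
proof -
  assume h: "1 \<le> a" "a < b"
  have "ln b - ln a < (b - a)/a" using ln_diff_less[of b a] h by auto
  moreover have "(b-a)/a \<le> b - a" using h
    by (simp add: divide_le_eq mult_le_cancel_left1)
  ultimately show ?thesis by linarith
qed

lemma Gscale: "\<beta> > 0 \<Longrightarrow> w > 0 \<Longrightarrow> G \<beta> (l \<beta> * w) = g \<beta> + (ln w - w + 1)/\<beta>"
proof -
  assume b: "\<beta> > 0" and w: "w > 0"
  have "ln (2 / (3 * \<beta>) * w) = ln (2 / (3 * \<beta>)) + ln w"
    using b w by (intro ln_mult_pos) auto
  thus ?thesis unfolding g_def G_def l_def using b by (simp add: field_simps)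
qed

lemma H_eq:
  assumes b: "\<beta> > 0" and w: "0 < w" "w \<le> 1"
  shows "H \<beta> (G \<beta> (l \<beta> * w)) = l \<beta> * w"
  unfolding H_def
proof (rule the_equality)
  have L: "l \<beta> > 0" using b by (simp add: l_def)
  show "0 < l \<beta> * w \<and> l \<beta> * w \<le> l \<beta> \<and> G \<beta> (l \<beta> * w) = G \<beta> (l \<beta> * w)"
    using L w by (simp add: mult_left_le)
  fix x assume x: "0 < x \<and> x \<le> l \<beta> \<and> G \<beta> x = G \<beta> (l \<beta> * w)"
  define w' where "w' = x / l \<beta>"
  have xw: "x = l \<beta> * w'" using L by (simp add: w'_def)
  have w': "0 < w'" "w' \<le> 1" using x L by (auto simp: w'_def)
  have "ln w' - w' = ln w - w" using x Gscale[OF b w'(1)] Gscale[OF b w(1)] b xw by simp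
  hence "w' = w" using P_inc[of w' w] P_inc[of w w'] w w' by (cases w' w rule: linorder_cases) auto
  thus "x = l \<beta> * w" using xw by simp
qed

lemma K_eq:
  assumes b: "\<beta> > 0" and w: "1 \<le> w"
  shows "K \<beta> (G \<beta> (l \<beta> * w)) = l \<beta> * w"
  unfolding K_def
proof (rule the_equality)
  have L: "l \<beta> > 0" using b by (simp add: l_def)
  show "l \<beta> \<le> l \<beta> * w \<and> G \<beta> (l \<beta> * w) = G \<beta> (l \<beta> * w)"
    using L w by simp
  fix x assume x: "l \<beta> \<le> x \<and> G \<beta> x = G \<beta> (l \<beta> * w)"
  define w' where "w' = x / l \<beta>"
  have xw: "x = l \<beta> * w'" using L by (simp add: w'_def)
  have w': "1 \<le> w'" using x L by (auto simp: w'_def)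
  have "ln w' - w' = ln w - w" using x Gscale[OF b] w' w b xw by simp
  hence "w' = w" using P_dec[of w' w] P_dec[of w w'] w w' by (cases w' w rule: linorder_cases) auto
  thus "x = l \<beta> * w" using xw by simp
qed

lemma exist1:
  assumes c: "c \<le> (-1::real)"
  shows "\<exists>w. 0 < w \<and> w \<le> 1 \<and> ln w - w = c"
proof -
  have "exp c \<le> 1" using c by simp
  moreover have "ln (exp c) - exp c \<le> c" by simp
  moreover have "c \<le> ln 1 - 1" using c by simp
  moreover have "continuous_on {exp c..1} (\<lambda>t::real. ln t - t)"
    by (intro continuous_intros) auto
  ultimately obtain w where "exp c \<le> w" "w \<le> 1" "ln w - w = c"
    using IVT'[of "\<lambda>t. ln t - t" "exp c" c 1] by auto
  moreover have "0 < w" using \<open>exp c \<le> w\<close> exp_gt_zero[of c] by linarith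
  ultimately show ?thesis by blast
qed

lemma exist2:
  assumes c: "c \<le> (-1::real)"
  shows "\<exists>w. 1 \<le> w \<and> ln w - w = c"
proof -
  have "1 \<le> 2 * -c" using c by simp
  moreover have "ln (2 * -c) - (2 * -c) \<le> c"
  proof -
    have "ln (2 * -c) = ln 2 + ln (-c)" using c by (intro ln_mult_pos) auto
    moreover have "ln (-c) \<le> -c - 1" using c ln_le_minus_one[of "-c"] by simp
    ultimately show ?thesis using ln_2_less_1 by linarith
  qed
  moreover have "c \<le> ln 1 - 1" using c by simp
  moreover have "continuous_on {1..2 * -c} (\<lambda>t::real. ln t - t)"
    by (intro continuous_intros) auto
  ultimately obtain w where "1 \<le> w" "ln w - w = c"
    using IVT2'[of "\<lambda>t. ln t - t" "2 * -c" c 1] by auto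
  thus ?thesis by blast
qed



definition chi :: "real \<Rightarrow> real \<Rightarrow> real" where "chi k t = (k+t)*ln t/(t-1)"
definition rr :: "real \<Rightarrow> real" where "rr t = 3 * ln t - t - 1 + 2/t"

lemma chi_deriv:
  fixes k t :: real assumes "t > 1"
  shows "(chi k has_real_derivative (-(k+1)*ln t + (k+t)*(t-1)/t)/(t-1)^2) (at t)"
proof -
  have "((\<lambda>t. (k+t)*ln t/(t-1)) has_real_derivative
          ((1*ln t + (k+t)*(1/t))*(t-1) - (k+t)*ln t*1)/((t-1)*(t-1))) (at t)"
    using assms by (intro derivative_eq_intros) auto
  moreover have "((1*ln t + (k+t)*(1/t))*(t-1) - (k+t)*ln t*1)/((t-1)*(t-1))
     = (-(k+1)*ln t + (k+t)*(t-1)/t)/(t-1)^2"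
    using assms by (simp add: field_simps power2_eq_square)
  ultimately show ?thesis by (simp add: chi_def[abs_def])
qed

lemma chi_cont: "1 < s \<Longrightarrow> continuous_on {s..t} (chi k)"
  unfolding chi_def[abs_def] by (intro continuous_intros) auto

lemma rr_deriv: "t > 0 \<Longrightarrow> (rr has_real_derivative (-(t-1)*(t-2)/t^2)) (at t)"
proof -
  assume t: "t > 0"
  have "((\<lambda>t. 3 * ln t - t - 1 + 2/t) has_real_derivative 3*(1/t) - 1 - 0 + -(2*1)/(t*t)) (at t)"
    using t by (intro derivative_eq_intros) auto
  moreover have "3*(1/t) - 1 - 0 + -(2*1)/(t*t) = (-(t-1)*(t-2)/t^2)"
    using t by (simp add: field_simps power2_eq_square)
  ultimately show ?thesis by (simp add: rr_def[abs_def])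
qed

lemma rr_cont: "0 < s \<Longrightarrow> continuous_on {s..t} rr"
  unfolding rr_def[abs_def] by (intro continuous_intros) auto

lemma rr_pos_small: assumes "1 < t" "t \<le> 2" shows "rr t > 0"
proof -
  have "rr 1 < rr t"
  proof (rule DERIV_pos_imp_increasing_open[of 1 t rr])
    fix x assume "1 < x" "x < t"
    hence "-(x-1)*(x-2)/x^2 > 0" using assms by (intro divide_pos_pos mult_neg_neg) auto
    thus "\<exists>y. DERIV rr x :> y \<and> y > 0" using rr_deriv[of x] \<open>1 < x\<close> by auto
  qed (use assms rr_cont in auto)
  thus ?thesis by (simp add: rr_def)
qed

lemma rr_dec: assumes "2 \<le> s" "s < t" shows "rr t < rr s"
proof (rule DERIV_neg_imp_decreasing_open[of s t rr])
  fix x assume "s < x" "x < t"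
  hence "-(x-1)*(x-2)/x^2 < 0" using assms by (intro divide_neg_pos mult_neg_pos) auto
  thus "\<exists>y. DERIV rr x :> y \<and> y < 0" using rr_deriv[of x] \<open>s < x\<close> assms by auto
qed (use assms rr_cont in auto)

lemma t0_ex: "\<exists>t0. 2 < t0 \<and> (\<forall>t. 1 < t \<and> t < t0 \<longrightarrow> rr t > 0) \<and> (\<forall>t. t0 < t \<longrightarrow> rr t < 0)"
proof -
  have r16: "rr 16 \<le> 0"
  proof -
    have "ln (16::real) = 4 * ln 2"
      using ln_realpow[of 2 4] by simp
    thus ?thesis using ln_2_less_1 by (simp add: rr_def)
  qed
  have r2: "rr 2 > 0" using rr_pos_small by simp
  obtain t0 where t0: "2 \<le> t0" "t0 \<le> 16" "rr t0 = 0"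
    using IVT2'[of rr 16 0 2] r16 r2 rr_cont[of 2 16] by auto
  have "t0 \<noteq> 2" using r2 t0 by auto
  hence "2 < t0" using t0 by simp
  moreover have "\<forall>t. 1 < t \<and> t < t0 \<longrightarrow> rr t > 0"
  proof (intro allI impI)
    fix t assume "1 < t \<and> t < t0"
    thus "rr t > 0" using rr_pos_small[of t] rr_dec[of t t0] t0 by (cases "t \<le> 2") auto
  qed
  moreover have "\<forall>t. t0 < t \<longrightarrow> rr t < 0" using rr_dec[of t0] \<open>2 < t0\<close> t0 by auto
  ultimately show ?thesis by blast
qed

lemma m_pos: assumes "1 < t" shows "t - 1/t - 2 * ln t > (0::real)"
proof -
  define mm where "mm = (\<lambda>t::real. t - 1/t - 2 * ln t)"
  have "mm 1 < mm t"
  proof (rule DERIV_pos_imp_increasing_open[of 1 t mm])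
    fix x :: real assume x: "1 < x" "x < t"
    have "((\<lambda>t. t - 1/t - 2 * ln t) has_real_derivative 1 - -(1*1)/(x*x) - 2*(1/x)) (at x)"
      using x by (intro derivative_eq_intros) auto
    moreover have "1 - -(1*1)/(x*x) - 2*(1/x) = (x-1)^2/x^2" using x
      by (simp add: field_simps power2_eq_square)
    moreover have "(x-1)^2/x^2 > 0" using x by simp
    ultimately show "\<exists>y. (mm has_real_derivative y) (at x) \<and> y > 0" unfolding mm_def by auto
  next
    show "continuous_on {1..t} mm" unfolding mm_def
      by (intro continuous_intros) auto
  qed (use assms in auto)
  thus ?thesis by (simp add: mm_def)
qed

lemma chi1_mono: assumes "1 < s" "s < t" shows "chi 1 s < chi 1 t"
proof (rule DERIV_pos_imp_increasing_open[of s t "chi 1"])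
  fix x assume x: "s < x" "x < t"
  hence "(-(1+1)*ln x + (1+x)*(x-1)/x)/(x-1)^2 > 0"
    using m_pos[of x] assms by (intro divide_pos_pos) (auto simp: field_simps)
  thus "\<exists>y. DERIV (chi 1) x :> y \<and> y > 0" using chi_deriv[of x 1] x assms by auto
qed (use assms chi_cont in auto)

lemma chi2_dec: assumes "1 < s" "s < t" "\<forall>x. s < x \<and> x < t \<longrightarrow> rr x > 0" shows "chi 2 t < chi 2 s"
proof (rule DERIV_neg_imp_decreasing_open[of s t "chi 2"])
  fix x assume x: "s < x" "x < t"
  have "-(2+1)*ln x + (2+x)*(x-1)/x = - rr x" using x assms by (simp add: rr_def field_simps)
  hence "(-(2+1)*ln x + (2+x)*(x-1)/x)/(x-1)^2 < 0"
    using assms x by (intro divide_neg_pos) auto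
  thus "\<exists>y. DERIV (chi 2) x :> y \<and> y < 0" using chi_deriv[of x 2] x assms by auto
qed (use assms chi_cont in auto)

lemma chi2_inc: assumes "1 < s" "s < t" "\<forall>x. s < x \<and> x < t \<longrightarrow> rr x < 0" shows "chi 2 s < chi 2 t"
proof (rule DERIV_pos_imp_increasing_open[of s t "chi 2"])
  fix x assume x: "s < x" "x < t"
  have "-(2+1)*ln x + (2+x)*(x-1)/x = - rr x" using x assms by (simp add: rr_def field_simps)
  hence "(-(2+1)*ln x + (2+x)*(x-1)/x)/(x-1)^2 > 0"
    using assms x by (intro divide_pos_pos) auto
  thus "\<exists>y. DERIV (chi 2) x :> y \<and> y > 0" using chi_deriv[of x 2] x assms by auto
qed (use assms chi_cont in auto)

lemma lim_chi: "(chi k \<longlongrightarrow> k + 1) (at_right 1)"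
proof -
  have "((\<lambda>t::real. (k+t)*ln t/(t-1)) \<longlongrightarrow> k + 1) (at_right 1)" by real_asymp
  thus ?thesis by (simp add: chi_def[abs_def])
qed

lemma bound_from_lim_dec:
  fixes f :: "real \<Rightarrow> real"
  assumes t: "1 < t" and dec: "\<And>s x. 1 < s \<Longrightarrow> s < x \<Longrightarrow> x \<le> t \<Longrightarrow> f x < f s"
    and lim: "(f \<longlongrightarrow> L) (at_right (1::real))"
  shows "f t < L"
proof -
  define m where "m = (1+t)/2"
  have m: "1 < m" "m < t" using t by (auto simp: m_def)
  have "f m \<le> L"
  proof (rule tendsto_lowerbound[OF lim])
    show "\<forall>\<^sub>F x in at_right 1. f m \<le> f x"
      unfolding eventually_at_right[OF m(1)]
      using m dec by (intro exI[of _ m]) (auto intro: less_imp_le)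
  qed simp
  thus ?thesis using dec[of m t] m by auto
qed

lemma bound_from_lim_inc:
  fixes f :: "real \<Rightarrow> real"
  assumes t: "1 < t" and inc: "\<And>s x. 1 < s \<Longrightarrow> s < x \<Longrightarrow> x \<le> t \<Longrightarrow> f s < f x"
    and lim: "(f \<longlongrightarrow> L) (at_right (1::real))"
  shows "L < f t"
proof -
  have "(\<lambda>x. - f x) t < - L"
    by (rule bound_from_lim_dec[OF t]) (use inc lim tendsto_minus in auto)
  thus ?thesis by simp
qed


lemma decomp:
  assumes b0: "\<beta> > 0" and y: "y \<le> g \<beta>"
  shows "\<exists>a b. 0 < a \<and> a \<le> 1 \<and> 1 \<le> b \<and> ln a - a = ln b - b \<and>
     y = g \<beta> + (ln a - a + 1)/\<beta> \<and> H \<beta> y = l \<beta> * a \<and> K \<beta> y = l \<beta> * b"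
proof -
  define c where "c = \<beta> * (y - g \<beta>) - 1"
  have c: "c \<le> -1" using b0 y by (simp add: c_def mult_nonneg_nonpos)
  have yc: "y = g \<beta> + (c + 1)/\<beta>" using b0 by (simp add: c_def)
  obtain a where a: "0 < a" "a \<le> 1" "ln a - a = c" using exist1[OF c] by blast
  obtain b where b: "1 \<le> b" "ln b - b = c" using exist2[OF c] by blast
  have ya: "y = G \<beta> (l \<beta> * a)" using Gscale[OF b0 a(1)] a yc by simp
  have yb: "y = G \<beta> (l \<beta> * b)" using Gscale[OF b0, of b] b yc by simp
  have "H \<beta> y = l \<beta> * a" using H_eq[OF b0 a(1,2)] ya by simp
  moreover have "K \<beta> y = l \<beta> * b" using K_eq[OF b0 b(1)] yb by simp
  ultimately show ?thesis using a b yc by (intro exI[of _ a] exI[of _ b]) auto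
qed

lemma decomp_lt:
  assumes b0: "\<beta> > 0" and y: "y < g \<beta>"
  shows "\<exists>a b. 0 < a \<and> a < 1 \<and> 1 < b \<and> ln a - a = ln b - b \<and>
     y = g \<beta> + (ln a - a + 1)/\<beta> \<and> H \<beta> y = l \<beta> * a \<and> K \<beta> y = l \<beta> * b"
proof -
  obtain a b where ab: "0 < a" "a \<le> 1" "1 \<le> b" "ln a - a = ln b - b"
     "y = g \<beta> + (ln a - a + 1)/\<beta>" "H \<beta> y = l \<beta> * a" "K \<beta> y = l \<beta> * b"
    using decomp[OF b0 less_imp_le[OF y]] by blast
  have "a \<noteq> 1"
  proof
    assume "a = 1"
    hence "y = g \<beta>" using ab(5) by simp
    thus False using y by simp
  qed
  moreover have "b \<noteq> 1"
  proof
    assume "b = 1"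
    hence "ln a - a + 1 = 0" using ab(4) by simp
    hence "y = g \<beta>" using ab(5) by simp
    thus False using y by simp
  qed
  ultimately show ?thesis using ab by (intro exI[of _ a] exI[of _ b]) auto
qed

lemma HK_g:
  assumes b0: "\<beta> > 0"
  shows "H \<beta> (g \<beta>) = l \<beta> \<and> K \<beta> (g \<beta>) = l \<beta>"
  using H_eq[OF b0, of 1] K_eq[OF b0, of 1] by (simp add: g_def)

lemma S_g: "\<beta> > 0 \<Longrightarrow> S k \<beta> (g \<beta>) = l \<beta> * (k + 1)"
  using HK_g[of \<beta>] by (simp add: S_def algebra_simps)

lemma P_le: "0 < a \<Longrightarrow> a \<le> b \<Longrightarrow> b \<le> 1 \<Longrightarrow> ln a - a \<le> ln b - (b::real)"
  using P_inc[of a b] by (cases "a = b") auto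

lemma P_ge: "1 \<le> a \<Longrightarrow> a \<le> b \<Longrightarrow> ln b - b \<le> ln a - (a::real)"
  using P_dec[of a b] by (cases "a = b") auto

lemma HK_mono:
  assumes b0: "\<beta> > 0" and y: "y1 < y2" "y2 \<le> g \<beta>"
  shows "0 < H \<beta> y1 \<and> H \<beta> y1 < H \<beta> y2 \<and> K \<beta> y2 < K \<beta> y1"
proof -
  have L: "l \<beta> > 0" using b0 by (simp add: l_def)
  obtain a1 b1 where 1: "0 < a1" "a1 \<le> 1" "1 \<le> b1" "ln a1 - a1 = ln b1 - b1"
     "y1 = g \<beta> + (ln a1 - a1 + 1)/\<beta>" "H \<beta> y1 = l \<beta> * a1" "K \<beta> y1 = l \<beta> * b1"
    using decomp[OF b0, of y1] y(1,2) by (meson order.trans less_imp_le)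
  obtain a2 b2 where 2: "0 < a2" "a2 \<le> 1" "1 \<le> b2" "ln a2 - a2 = ln b2 - b2"
     "y2 = g \<beta> + (ln a2 - a2 + 1)/\<beta>" "H \<beta> y2 = l \<beta> * a2" "K \<beta> y2 = l \<beta> * b2"
    using decomp[OF b0, of y2] y by blast
  have lt: "(ln a1 - a1 + 1)/\<beta> < (ln a2 - a2 + 1)/\<beta>" using 1(5) 2(5) y by simp
  hence lt': "ln a1 - a1 < ln a2 - a2" using b0 by (simp add: divide_less_cancel)
  have "a1 < a2"
  proof (rule ccontr)
    assume "\<not> a1 < a2"
    thus False using P_le[of a2 a1] 1 2 lt' by auto
  qed
  moreover have "b2 < b1"
  proof (rule ccontr)
    assume "\<not> b2 < b1"
    thus False using P_ge[of b1 b2] 1 2 lt' by auto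
  qed
  ultimately show ?thesis using 1 2 L by auto
qed

lemma S_chi:
  assumes b0: "\<beta> > 0" and y: "y < g \<beta>"
  shows "1 < K \<beta> y / H \<beta> y \<and> S k \<beta> y = l \<beta> * chi k (K \<beta> y / H \<beta> y)"
proof -
  have L: "l \<beta> > 0" using b0 by (simp add: l_def)
  obtain a b where ab: "0 < a" "a < 1" "1 < b" "ln a - a = ln b - b"
     "H \<beta> y = l \<beta> * a" "K \<beta> y = l \<beta> * b"
    using decomp_lt[OF b0 y] by blast
  define t where "t = b / a"
  have tq: "K \<beta> y / H \<beta> y = t" using ab L by (simp add: t_def)
  have t1: "t > 1" using ab by (simp add: t_def)
  have "ln t = ln b - ln a" using ab by (simp add: t_def ln_div)
  also have "\<dots> = b - a" using ab(4) by simp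
  also have "\<dots> = a * (t - 1)" using ab by (simp add: t_def field_simps)
  finally have lt: "ln t = a * (t - 1)" .
  have "chi k t = (k + t) * a" using t1 lt by (simp add: chi_def)
  hence "l \<beta> * chi k t = k * (l \<beta> * a) + l \<beta> * (t * a)" by (simp add: algebra_simps)
  moreover have "t * a = b" using ab by (simp add: t_def)
  ultimately have "l \<beta> * chi k t = k * (l \<beta> * a) + l \<beta> * b" by simp
  thus ?thesis using tq t1 ab by (simp add: S_def)
qed

lemma T_dec:
  assumes b0: "\<beta> > 0" and y: "y1 < y2" "y2 \<le> g \<beta>"
  shows "K \<beta> y2 / H \<beta> y2 < K \<beta> y1 / H \<beta> y1"
proof -
  have L: "l \<beta> > 0" using b0 by (simp add: l_def)
  have m: "0 < H \<beta> y1" "H \<beta> y1 < H \<beta> y2" "K \<beta> y2 < K \<beta> y1" using HK_mono[OF b0 y] by auto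
  obtain a b where "1 \<le> b" "K \<beta> y2 = l \<beta> * b" using decomp[OF b0 y(2)] by blast
  hence k2: "K \<beta> y2 > 0" using L by simp
  have "K \<beta> y2 / H \<beta> y2 < K \<beta> y2 / H \<beta> y1" using m k2
    by (intro divide_strict_left_mono) auto
  also have "\<dots> < K \<beta> y1 / H \<beta> y1" using m by (intro divide_strict_right_mono) auto
  finally show ?thesis .
qed

theorem lemma5p6:
  fixes \<beta> :: real
  assumes "\<beta> > 2"
  shows "strict_antimono_on {..g \<beta>} (S 1 \<beta>) \<and>
    (\<exists>gt. gt < g \<beta> \<and> strict_antimono_on {..<gt} (S 2 \<beta>)
                        \<and> strict_mono_on {gt<..g \<beta>} (S 2 \<beta>))"
proof -
  have b0: "\<beta> > 0" using assms by simp
  have L: "l \<beta> > 0" using b0 by (simp add: l_def)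
  define T where "T y = K \<beta> y / H \<beta> y" for y
  have part1: "strict_antimono_on {..g \<beta>} (S 1 \<beta>)"
  proof (rule monotone_onI)
    fix y1 y2 assume y: "y1 \<in> {..g \<beta>}" "y2 \<in> {..g \<beta>}" "y1 < y2"
    have y1g: "y1 < g \<beta>" using y by auto
    obtain t1: "1 < T y1" "S 1 \<beta> y1 = l \<beta> * chi 1 (T y1)" using S_chi[OF b0 y1g] T_def by auto
    show "S 1 \<beta> y2 < S 1 \<beta> y1"
    proof (cases "y2 = g \<beta>")
      case True
      have "1 + 1 < chi 1 (T y1)"
        by (rule bound_from_lim_inc[OF t1(1) _ lim_chi]) (rule chi1_mono; simp)
      thus ?thesis using True t1 S_g[OF b0] L by simp
    next
      case False
      hence y2g: "y2 < g \<beta>" using y by auto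
      obtain t2: "1 < T y2" "S 1 \<beta> y2 = l \<beta> * chi 1 (T y2)" using S_chi[OF b0 y2g] T_def by auto
      have "T y2 < T y1" using T_dec[OF b0 y(3)] y2g T_def by simp
      hence "chi 1 (T y2) < chi 1 (T y1)" using chi1_mono t2 by simp
      thus ?thesis using t1 t2 L by simp
    qed
  qed
  obtain t0 where t0: "2 < t0" "\<And>t. 1 < t \<Longrightarrow> t < t0 \<Longrightarrow> rr t > 0" "\<And>t. t0 < t \<Longrightarrow> rr t < 0"
    using t0_ex by blast
  define u0 where "u0 = ln t0 / (t0 - 1)"
  define v0 where "v0 = t0 * u0"
  have lnt0: "0 < ln t0" using t0 by simp
  have u0: "0 < u0" "u0 < 1" using lnt0 ln_lt[of t0] t0 by (auto simp: u0_def divide_less_eq)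
  have "ln (1/t0) < 1/t0 - 1" using ln_lt[of "1/t0"] t0 by auto
  hence "1 - 1/t0 < ln t0" using t0 by (simp add: ln_div)
  hence "t0 - 1 < t0 * ln t0" using t0 by (simp add: field_simps)
  hence v0: "1 < v0" using t0 by (simp add: v0_def u0_def field_simps)
  have "ln v0 = ln t0 + ln u0" using t0 u0 by (simp add: v0_def ln_mult_pos)
  moreover have "v0 - u0 = ln t0"
  proof -
    have "v0 - u0 = u0 * (t0 - 1)" by (simp add: v0_def algebra_simps)
    also have "\<dots> = ln t0" using t0 by (simp add: u0_def)
    finally show ?thesis .
  qed
  ultimately have Puv: "ln u0 - u0 = ln v0 - v0" by simp
  define gt where "gt = G \<beta> (l \<beta> * u0)"
  have gtv: "gt = G \<beta> (l \<beta> * v0)" using Gscale[OF b0 u0(1)] Gscale[OF b0, of v0] v0 Puv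
    by (simp add: gt_def)
  have Hgt: "H \<beta> gt = l \<beta> * u0" using H_eq[OF b0 u0(1)] u0 by (simp add: gt_def)
  have Kgt: "K \<beta> gt = l \<beta> * v0" using K_eq[OF b0, of v0] v0 gtv by simp
  have Tgt: "T gt = t0" using Hgt Kgt L u0 by (simp add: T_def v0_def)
  have "ln u0 - u0 < ln 1 - 1" using P_inc[of u0 1] u0 by simp
  hence "(ln u0 - u0 + 1)/\<beta> < 0" using b0 by (simp add: divide_neg_pos)
  hence gtg: "gt < g \<beta>" using Gscale[OF b0 u0(1)] by (simp add: gt_def)
  have part2: "strict_antimono_on {..<gt} (S 2 \<beta>)"
  proof (rule monotone_onI)
    fix y1 y2 assume y: "y1 \<in> {..<gt}" "y2 \<in> {..<gt}" "y1 < y2"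
    have y2g: "y2 < g \<beta>" "y1 < g \<beta>" using y gtg by auto
    obtain t1: "1 < T y1" "S 2 \<beta> y1 = l \<beta> * chi 2 (T y1)" using S_chi[OF b0 y2g(2)] T_def by auto
    obtain t2: "1 < T y2" "S 2 \<beta> y2 = l \<beta> * chi 2 (T y2)" using S_chi[OF b0 y2g(1)] T_def by auto
    have "T y2 < T y1" using T_dec[OF b0 y(3)] y2g T_def by simp
    moreover have "t0 < T y2" using T_dec[OF b0, of y2 gt] y gtg Tgt T_def by simp
    ultimately have "chi 2 (T y2) < chi 2 (T y1)" using t2 t0
      by (intro chi2_inc) auto
    thus "S 2 \<beta> y2 < S 2 \<beta> y1" using t1 t2 L by simp
  qed
  have dec2: "chi 2 x < chi 2 s" if "1 < s" "s < x" "x \<le> t" "t < t0" for s x t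
    using that t0 by (intro chi2_dec) auto
  have part3: "strict_mono_on {gt<..g \<beta>} (S 2 \<beta>)"
  proof (rule monotone_onI)
    fix y1 y2 assume y: "y1 \<in> {gt<..g \<beta>}" "y2 \<in> {gt<..g \<beta>}" "y1 < y2"
    have y1g: "y1 < g \<beta>" using y by auto
    obtain t1: "1 < T y1" "S 2 \<beta> y1 = l \<beta> * chi 2 (T y1)" using S_chi[OF b0 y1g] T_def by auto
    have t1t0: "T y1 < t0" using T_dec[OF b0, of gt y1] y Tgt T_def by simp
    show "S 2 \<beta> y1 < S 2 \<beta> y2"
    proof (cases "y2 = g \<beta>")
      case True
      have "chi 2 (T y1) < 2 + 1"
        by (rule bound_from_lim_dec[OF t1(1) _ lim_chi]) (rule dec2[OF _ _ _ t1t0]; simp)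
      thus ?thesis using True t1 S_g[OF b0] L by simp
    next
      case False
      hence y2g: "y2 < g \<beta>" using y by auto
      obtain t2: "1 < T y2" "S 2 \<beta> y2 = l \<beta> * chi 2 (T y2)" using S_chi[OF b0 y2g] T_def by auto
      have "T y2 < T y1" using T_dec[OF b0 y(3)] y2g T_def by simp
      hence "chi 2 (T y1) < chi 2 (T y2)" using dec2[of "T y2" "T y1" "T y1"] t2 t1t0 by simp
      thus ?thesis using t1 t2 L by simp
    qed
  qed
  show ?thesis using part1 part2 part3 gtg by blast
qed

end
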